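(* Let $\mathscr{X},\mathscr{Y},\mathscr{Z}$ be real Banach spaces with duals $\mathscr{X}^*,\mathscr{Y}^*,\mathscr{Z}^*$, let $A:\mathscr{X}\to\mathscr{Y}$, $B:\mathscr{X}\to\mathscr{Z}$ be bounded linear operators with adjoints $A^*,B^*$, let $\mathbf{y}_0\in\mathscr{Y}$ and $\rho>0$. Suppose $\hat{\mathbf{x}}\in\mathscr{X}$ satisfies $$\|\mathbf{y}_0-A\hat{\mathbf{x}}\|_{\mathscr{Y}}+\rho\|B\hat{\mathbf{x}}\|_{\mathscr{Z}}=\inf\{\|\mathbf{y}_0-A\mathbf{x}\|_{\mathscr{Y}}+\rho\|B\mathbf{x}\|_{\mathscr{Z}}:\mathbf{x}\in\mathscr{X}\}>0,$$ and $(\hat\lambda,\hat\mu)\in\mathscr{Y}^*\times\mathscr{Z}^*$ satisfies $\max\{\|\hat\lambda\|_{\mathscr{Y}^*},\|\hat\mu\|_{\mathscr{Z}^*}\}=1$, $A^*\hat\lambda+\rho B^*\hat\mu=0$ and $$\langle\mathbf{y}_0,\hat\lambda\rangle_{\mathscr{Y}}=\sup\{|\langle\mathbf{y}_0,\lambda\rangle_{\mathscr{Y}}|:\ \max\{\|\lambda\|_{\mathscr{Y}^*},\|\mu\|_{\mathscr{Z}^*}\}\le1,\ A^*\lambda+\rho B^*\mu=0\}>0.$$ Then: 1. If $\|\hat\lambda\|_{\mathscr{Y}^*}>\|\hat\mu\|_{\mathscr{Z}^*}$, then $B\hat{\mathbf{x}}=0$ and $\|\mathbf{y}_0-A\hat{\mathbf{x}}\|_{\mathscr{Y}}=\langle\mathbf{y}_0,\hat\lambda\rangle_{\mathscr{Y}}$.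 2. If $\|\hat\lambda\|_{\mathscr{Y}^*}<\|\hat\mu\|_{\mathscr{Z}^*}$, then $A\hat{\mathbf{x}}=\mathbf{y}_0$ and $\rho\|B\hat{\mathbf{x}}\|_{\mathscr{Z}}=\langle\mathbf{y}_0,\hat\lambda\rangle_{\mathscr{Y}}$. 3. If $\|\hat\lambda\|_{\mathscr{Y}^*}=\|\hat\mu\|_{\mathscr{Z}^*}$, then one of the following holds: (i) $B\hat{\mathbf{x}}=0$ and $\|\mathbf{y}_0-A\hat{\mathbf{x}}\|_{\mathscr{Y}}=\langle\mathbf{y}_0,\hat\lambda\rangle_{\mathscr{Y}}$; (ii) $A\hat{\mathbf{x}}=\mathbf{y}_0$ and $\rho\|B\hat{\mathbf{x}}\|_{\mathscr{Z}}=\langle\mathbf{y}_0,\hat\lambda\rangle_{\mathscr{Y}}$; (iii) $\mathbf{y}_0-A\hat{\mathbf{x}}\ne0$, $B\hat{\mathbf{x}}\ne0$, $(\mathbf{y}_0-A\hat{\mathbf{x}})/\|\mathbf{y}_0-A\hat{\mathbf{x}}\|_{\mathscr{Y}}$ is norming for $\hat\lambda$ and $-B\hat{\mathbf{x}}/\|B\hat{\mathbf{x}}\|_{\mathscr{Z}}$ is norming for $\hat\mu$.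
   Context: $\langle\mathbf{y},\lambda\rangle_{\mathscr{Y}}:=\lambda(\mathbf{y})$. For $\lambda\in\mathscr{Y}^*$, a vector $\mathbf{y}\in\mathscr{Y}$ is norming for $\lambda$ if $\|\mathbf{y}\|_{\mathscr{Y}}=1$ and $\langle\mathbf{y},\lambda\rangle_{\mathscr{Y}}=\|\lambda\|_{\mathscr{Y}^*}$; similarly for $\mathscr{Z}$. *)

theory Defs
  imports "HOL-Analysis.Analysis"
begin

definition norming_for :: "'a::real_normed_vector \<Rightarrow> ('a \<Rightarrow>\<^sub>L real) \<Rightarrow> bool" where
  "norming_for y l \<longleftrightarrow> norm y = 1 \<and> blinfun_apply l y = norm l"

definition adjoint_op :: "('a::real_normed_vector \<Rightarrow>\<^sub>L 'b::real_normed_vector) \<Rightarrow> ('b \<Rightarrow>\<^sub>L real) \<Rightarrow> ('a \<Rightarrow>\<^sub>L real)" where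
  "adjoint_op A l = l o\<^sub>L A"

end

theory Submission
  imports Defs
begin

lemma hb:
  fixes p :: "'a::real_vector \<Rightarrow> real" and G0 :: "('a \<times> real) set"
  assumes padd: "\<And>x y. p (x + y) \<le> p x + p y"
    and pscale: "\<And>c x. c \<ge> 0 \<Longrightarrow> p (c *\<^sub>R x) = c * p x"
    and G0sub: "subspace G0"
    and G0fun: "\<And>x a b. (x,a) \<in> G0 \<Longrightarrow> (x,b) \<in> G0 \<Longrightarrow> a = b"
    and G0dom: "\<And>x a. (x,a) \<in> G0 \<Longrightarrow> a \<le> p x"
  shows "\<exists>F. linear F \<and> (\<forall>x. F x \<le> p x) \<and> (\<forall>x a. (x,a) \<in> G0 \<longrightarrow> F x = a)"
proof -
  define good where "good G \<longleftrightarrow> subspace G \<and> (\<forall>x a b. (x,a)\<in>G \<longrightarrow> (x,b)\<in>G \<longrightarrow> a=b)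
     \<and> (\<forall>x a. (x,a)\<in>G \<longrightarrow> a \<le> p x) \<and> G0 \<subseteq> G" for G
  have "\<exists>M\<in>{G. good G}. \<forall>X\<in>{G. good G}. M \<subseteq> X \<longrightarrow> X = M"
  proof (rule Zorn_Lemma2, intro ballI)
    fix C assume C: "C \<in> chains {G. good G}"
    show "\<exists>U\<in>{G. good G}. \<forall>X\<in>C. X \<subseteq> U"
    proof (cases "C = {}")
      case True then show ?thesis using G0sub G0fun G0dom unfolding good_def by auto
    next
      case False
      have ch: "\<And>X Y. X\<in>C \<Longrightarrow> Y\<in>C \<Longrightarrow> X \<subseteq> Y \<or> Y \<subseteq> X" using chainsD[OF C] by blast
      have gC: "\<And>X. X\<in>C \<Longrightarrow> good X" using chainsD2[OF C] by blast
      have two: "\<exists>Z\<in>C. u \<in> Z \<and> v \<in> Z" if "u \<in> \<Union>C" "v \<in> \<Union>C" for u v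
        using that ch by blast
      have "good (\<Union>C)"
        unfolding good_def
      proof (intro conjI allI impI)
        show "subspace (\<Union>C)" unfolding subspace_def
        proof (intro conjI ballI allI)
          show "0 \<in> \<Union>C" using False gC subspace_0 unfolding good_def by blast
        next
          fix x y assume "x \<in> \<Union>C" "y \<in> \<Union>C"
          then obtain Z where "Z \<in> C" "x \<in> Z" "y \<in> Z" using two by blast
          then show "x + y \<in> \<Union>C" using gC subspace_add unfolding good_def by blast
        next
          fix c x assume "x \<in> \<Union>C"
          then show "c *\<^sub>R x \<in> \<Union>C" using gC subspace_scale unfolding good_def by blast
        qed
      next
        fix x a b assume "(x,a) \<in> \<Union>C" "(x,b) \<in> \<Union>C"
        then obtain Z where "Z \<in> C" "(x,a) \<in> Z" "(x,b) \<in> Z" using two by blast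
        then show "a = b" using gC unfolding good_def by blast
      next
        fix x a assume "(x,a) \<in> \<Union>C"
        then show "a \<le> p x" using gC unfolding good_def by blast
      next
        show "G0 \<subseteq> \<Union>C" using False gC unfolding good_def by blast
      qed
      then show ?thesis by blast
    qed
  qed
  then obtain M where gM: "good M" and maxM: "\<And>X. good X \<Longrightarrow> M \<subseteq> X \<Longrightarrow> X = M" by blast
  have Msub: "subspace M" and Mfun: "\<And>x a b. (x,a)\<in>M \<Longrightarrow> (x,b)\<in>M \<Longrightarrow> a=b"
    and Mdom: "\<And>x a. (x,a)\<in>M \<Longrightarrow> a \<le> p x" and G0M: "G0 \<subseteq> M"
    using gM unfolding good_def by blast+
  have M0: "(0,0) \<in> M" using subspace_0[OF Msub] by (simp add: zero_prod_def)
  have Madd: "(x+y, a+b) \<in> M" if "(x,a)\<in>M" "(y,b)\<in>M" for x y a b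
    using subspace_add[OF Msub that] by simp
  have Mscale: "(c *\<^sub>R x, c * a) \<in> M" if "(x,a)\<in>M" for x a c
    using subspace_scale[OF Msub that, of c] by simp
  have total: "\<exists>a. (x0,a) \<in> M" for x0
  proof (rule ccontr)
    assume nx: "\<nexists>a. (x0, a) \<in> M"
    define L where "L = {a - p (x - x0) | x a. (x,a) \<in> M}"
    define c where "c = Sup L"
    have key: "a - p (x - x0) \<le> p (y + x0) - b" if "(x,a)\<in>M" "(y,b)\<in>M" for x a y b
    proof -
      have "a + b \<le> p (x + y)" using Mdom[OF Madd[OF that]] .
      also have "\<dots> \<le> p (x - x0) + p (y + x0)" using padd[of "x - x0" "y + x0"] by simp
      finally show ?thesis by simp
    qed
    have Lne: "L \<noteq> {}" using M0 unfolding L_def by blast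
    have Lbdd: "bdd_above L" unfolding L_def bdd_above_def using key[OF _ M0] by blast
    have c_lo: "a - p (x - x0) \<le> c" if "(x,a)\<in>M" for x a
      unfolding c_def by (rule cSup_upper[OF _ Lbdd]) (use that L_def in blast)
    have c_hi: "c \<le> p (y + x0) - b" if "(y,b)\<in>M" for y b
      unfolding c_def by (rule cSup_least[OF Lne]) (use that key L_def in blast)
    define M' where "M' = {(x + t *\<^sub>R x0, a + t * c) | x a t. (x,a) \<in> M}"
    have "good M'"
      unfolding good_def
    proof (intro conjI allI impI)
      show "subspace M'" unfolding subspace_def
      proof (intro conjI ballI allI)
        show "0 \<in> M'" unfolding M'_def using M0 by (auto simp: zero_prod_def intro!: exI[of _ 0])
      next
        fix u v assume "u \<in> M'" "v \<in> M'"
        then obtain x a t y b s where u: "u = (x + t *\<^sub>R x0, a + t * c)" "(x,a)\<in>M"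
          and v: "v = (y + s *\<^sub>R x0, b + s * c)" "(y,b)\<in>M" unfolding M'_def by blast
        have "u + v = ((x + y) + (t + s) *\<^sub>R x0, (a + b) + (t + s) * c)"
          using u v by (simp add: algebra_simps)
        then show "u + v \<in> M'" unfolding M'_def using Madd[OF u(2) v(2)] by blast
      next
        fix r u assume "u \<in> M'"
        then obtain x a t where u: "u = (x + t *\<^sub>R x0, a + t * c)" "(x,a)\<in>M" unfolding M'_def by blast
        have "r *\<^sub>R u = (r *\<^sub>R x + (r * t) *\<^sub>R x0, r * a + (r * t) * c)"
          using u by (simp add: algebra_simps)
        then show "r *\<^sub>R u \<in> M'" unfolding M'_def using Mscale[OF u(2)] by blast
      qed
    next
      fix z a' b' assume "(z,a') \<in> M'" "(z,b') \<in> M'"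
      then obtain x a t y b s where u: "z = x + t *\<^sub>R x0" "a' = a + t * c" "(x,a)\<in>M"
          and v: "z = y + s *\<^sub>R x0" "b' = b + s * c" "(y,b)\<in>M" unfolding M'_def by blast
      have ts: "t = s"
      proof (rule ccontr)
        assume "t \<noteq> s"
        have "(t - s) *\<^sub>R x0 = y - x" using u(1) v(1) by (simp add: algebra_simps)
        moreover have "(1 / (t - s)) *\<^sub>R ((t - s) *\<^sub>R x0) = x0" using \<open>t \<noteq> s\<close> by simp
        ultimately have "x0 = (1 / (t - s)) *\<^sub>R (y - x)" by simp
        moreover have "(y - x, b - a) \<in> M" using Madd[OF v(3) Mscale[OF u(3), of "-1"]] by simp
        ultimately have "(x0, (1 / (t - s)) * (b - a)) \<in> M" using Mscale by metis
        then show False using nx by blast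
      qed
      then have "x = y" using u(1) v(1) by simp
      then have "a = b" using Mfun u(3) v(3) by blast
      then show "a' = b'" using u v ts by simp
    next
      fix z a' assume "(z,a') \<in> M'"
      then obtain x a t where u: "z = x + t *\<^sub>R x0" "a' = a + t * c" "(x,a)\<in>M" unfolding M'_def by blast
      show "a' \<le> p z"
      proof (cases t "0::real" rule: linorder_cases)
        case equal then show ?thesis using u Mdom by simp
      next
        case greater
        have "c \<le> p ((1/t) *\<^sub>R x + x0) - (1/t) * a" using c_hi[OF Mscale[OF u(3)]] .
        then have "t * c \<le> t * p ((1/t) *\<^sub>R x + x0) - a" using greater
          by (simp add: field_simps)
        also have "t * p ((1/t) *\<^sub>R x + x0) = p (t *\<^sub>R ((1/t) *\<^sub>R x + x0))"
          using pscale greater by simp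
        also have "t *\<^sub>R ((1/t) *\<^sub>R x + x0) = z" using u greater by (simp add: algebra_simps)
        finally show ?thesis using u by simp
      next
        case less
        define s where "s = - t"
        have s: "s > 0" using less s_def by simp
        have "(1/s) * a - p ((1/s) *\<^sub>R x - x0) \<le> c" using c_lo[OF Mscale[OF u(3)]] .
        then have "a - s * p ((1/s) *\<^sub>R x - x0) \<le> s * c" using s
          by (simp add: field_simps)
        also have "s * p ((1/s) *\<^sub>R x - x0) = p (s *\<^sub>R ((1/s) *\<^sub>R x - x0))"
          using pscale s by simp
        also have "s *\<^sub>R ((1/s) *\<^sub>R x - x0) = z" using u s s_def by (simp add: algebra_simps)
        finally show ?thesis using u s_def by simp
      qed
    next
      show "G0 \<subseteq> M'"
      proof
        fix g assume "g \<in> G0"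
        then have "g \<in> M" using G0M by blast
        moreover have "g = (fst g + 0 *\<^sub>R x0, snd g + 0 * c)" by simp
        ultimately show "g \<in> M'" unfolding M'_def by (metis (mono_tags, lifting) mem_Collect_eq prod.collapse)
      qed
    qed
    moreover have "M \<subseteq> M'"
    proof
      fix g assume "g \<in> M"
      moreover have "g = (fst g + 0 *\<^sub>R x0, snd g + 0 * c)" by simp
      ultimately show "g \<in> M'" unfolding M'_def by (metis (mono_tags, lifting) mem_Collect_eq prod.collapse)
    qed
    ultimately have "M' = M" using maxM by blast
    moreover have "(x0, c) \<in> M'"
    proof -
      have "(x0, c) = (0 + 1 *\<^sub>R x0, 0 + 1 * c)" by simp
      then show ?thesis unfolding M'_def using M0 by blast
    qed
    ultimately show False using nx by blast
  qed
  define F where "F x = (THE a. (x,a) \<in> M)" for x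
  have Fmem: "(x, F x) \<in> M" for x
    unfolding F_def using total[of x] Mfun by (metis theI)
  have Funiq: "(x,a) \<in> M \<Longrightarrow> F x = a" for x a using Fmem Mfun by blast
  have "linear F"
  proof (rule linearI)
    fix x y show "F (x + y) = F x + F y" using Funiq[OF Madd[OF Fmem Fmem]] .
  next
    fix r x show "F (r *\<^sub>R x) = r *\<^sub>R F x" using Funiq[OF Mscale[OF Fmem]] by simp
  qed
  moreover have "\<forall>x. F x \<le> p x" using Fmem Mdom by blast
  moreover have "\<forall>x a. (x,a) \<in> G0 \<longrightarrow> F x = a" using Funiq G0M by blast
  ultimately show ?thesis by blast
qed


lemma blinfun_of_functional:
  fixes g :: "'a::real_normed_vector \<Rightarrow> real"
  assumes add: "\<And>x y. g (x + y) = g x + g y" and sc: "\<And>r x. g (r *\<^sub>R x) = r * g x"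
    and bd: "\<And>x. g x \<le> norm x"
  shows "\<exists>l. blinfun_apply l = g \<and> norm l \<le> 1"
proof -
  have nb: "norm (g x) \<le> norm x * 1" for x
  proof -
    have "g (- x) = - g x" using sc[of "-1" x] by simp
    then show ?thesis using bd[of x] bd[of "-x"] by simp
  qed
  have bl: "bounded_linear g"
    by (rule bounded_linear_intro[where K=1]) (rule add, rule sc[unfolded real_scaleR_def[symmetric]], rule nb)
  show ?thesis
  proof (intro exI conjI)
    show "blinfun_apply (Blinfun g) = g" by (rule bounded_linear_Blinfun_apply[OF bl])
    show "norm (Blinfun g) \<le> 1"
      using nb by (intro norm_blinfun_bound) (simp_all add: bounded_linear_Blinfun_apply[OF bl])
  qed
qed

lemma adj_apply:
  assumes "adjoint_op A l + \<rho> *\<^sub>R adjoint_op B m = 0"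
  shows "l (A x) + \<rho> * m (B x) = 0"
proof -
  have "blinfun_apply (adjoint_op A l + \<rho> *\<^sub>R adjoint_op B m) x = 0" using assms by simp
  then show ?thesis by (simp add: adjoint_op_def plus_blinfun.rep_eq scaleR_blinfun.rep_eq)
qed

theorem proposition3p6:
  fixes A :: "'x::banach \<Rightarrow>\<^sub>L 'y::banach"
    and B :: "'x \<Rightarrow>\<^sub>L 'z::banach"
    and y0 :: 'y and \<rho> :: real
    and xh :: 'x and lh :: "'y \<Rightarrow>\<^sub>L real" and mh :: "'z \<Rightarrow>\<^sub>L real"
  assumes rho: "\<rho> > 0"
    and xmin: "norm (y0 - A xh) + \<rho> * norm (B xh)
               = Inf {norm (y0 - A x) + \<rho> * norm (B x) | x. True}"
    and infpos: "Inf {norm (y0 - A x) + \<rho> * norm (B x) | x. True} > 0"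
    and dnorm: "max (norm lh) (norm mh) = 1"
    and dfeas: "adjoint_op A lh + \<rho> *\<^sub>R adjoint_op B mh = 0"
    and dopt: "lh y0 = Sup {\<bar>blinfun_apply l y0\<bar> | (l :: 'y \<Rightarrow>\<^sub>L real) (m :: 'z \<Rightarrow>\<^sub>L real). max (norm l) (norm m) \<le> 1
                    \<and> adjoint_op A l + \<rho> *\<^sub>R adjoint_op B m = 0}"
    and suppos: "Sup {\<bar>blinfun_apply l y0\<bar> | (l :: 'y \<Rightarrow>\<^sub>L real) (m :: 'z \<Rightarrow>\<^sub>L real). max (norm l) (norm m) \<le> 1
                    \<and> adjoint_op A l + \<rho> *\<^sub>R adjoint_op B m = 0} > 0"
  shows "(norm lh > norm mh \<longrightarrow> B xh = 0 \<and> norm (y0 - A xh) = lh y0)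
       \<and> (norm lh < norm mh \<longrightarrow> A xh = y0 \<and> \<rho> * norm (B xh) = lh y0)
       \<and> (norm lh = norm mh \<longrightarrow>
            (B xh = 0 \<and> norm (y0 - A xh) = lh y0)
          \<or> (A xh = y0 \<and> \<rho> * norm (B xh) = lh y0)
          \<or> (y0 - A xh \<noteq> 0 \<and> B xh \<noteq> 0
             \<and> norming_for ((y0 - A xh) /\<^sub>R norm (y0 - A xh)) lh
             \<and> norming_for (- (B xh /\<^sub>R norm (B xh))) mh))"
proof -
  define P where "P x = norm (y0 - A x) + \<rho> * norm (B x)" for x
  define \<delta> where "\<delta> = P xh"
  have bb: "bdd_below {norm (y0 - A x) + \<rho> * norm (B x) | x. True}"
    unfolding bdd_below_def using rho by (auto intro!: exI[of _ 0] add_nonneg_nonneg)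
  have dle: "\<delta> \<le> P x" for x
    unfolding \<delta>_def P_def xmin by (rule cInf_lower[OF _ bb]) auto
  have dpos: "\<delta> > 0" using infpos xmin unfolding \<delta>_def P_def by simp
  have weak: "\<bar>l y0\<bar> \<le> \<delta>" if "max (norm l) (norm m) \<le> 1"
      "adjoint_op A l + \<rho> *\<^sub>R adjoint_op B m = 0" for l :: "'y \<Rightarrow>\<^sub>L real" and m :: "'z \<Rightarrow>\<^sub>L real"
  proof -
    have e: "l (A xh) + \<rho> * m (B xh) = 0" using adj_apply[OF that(2)] .
    have "l y0 = l (y0 - A xh) + l (A xh)" by (simp add: blinfun.diff_right)
    then have ly: "l y0 = l (y0 - A xh) - \<rho> * m (B xh)" using e by simp
    have "\<bar>l (y0 - A xh)\<bar> \<le> norm l * norm (y0 - A xh)" using norm_blinfun[of l] by simp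
    also have "\<dots> \<le> norm (y0 - A xh)" using that(1) by (simp add: mult_left_le_one_le)
    finally have 1: "\<bar>l (y0 - A xh)\<bar> \<le> norm (y0 - A xh)" .
    have "\<bar>m (B xh)\<bar> \<le> norm m * norm (B xh)" using norm_blinfun[of m] by simp
    also have "\<dots> \<le> norm (B xh)" using that(1) by (simp add: mult_left_le_one_le)
    finally have "\<bar>m (B xh)\<bar> \<le> norm (B xh)" .
    then have 2: "\<bar>\<rho> * m (B xh)\<bar> \<le> \<rho> * norm (B xh)" using rho by (simp add: abs_mult)
    show ?thesis using 1 2 ly unfolding \<delta>_def P_def by linarith
  qed
  define S where "S = {\<bar>blinfun_apply l y0\<bar> | (l :: 'y \<Rightarrow>\<^sub>L real) (m :: 'z \<Rightarrow>\<^sub>L real). max (norm l) (norm m) \<le> 1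
                    \<and> adjoint_op A l + \<rho> *\<^sub>R adjoint_op B m = 0}"
  have Sbdd: "bdd_above S" unfolding S_def bdd_above_def using weak by blast
  \<comment> \<open>strong duality via Hahn-Banach\<close>
  define G0 :: "(('y \<times> 'z) \<times> real) set" where
    "G0 = {((t *\<^sub>R y0 + A x, \<rho> *\<^sub>R B x), t * \<delta>) | t x. True}"
  define p :: "'y \<times> 'z \<Rightarrow> real" where "p v = norm (fst v) + norm (snd v)" for v
  have G0sub: "subspace G0" unfolding subspace_def
  proof (intro conjI ballI allI)
    show "0 \<in> G0" unfolding G0_def
      by (auto simp: zero_prod_def intro!: exI[of _ 0] exI[of _ "0::'x"])
  next
    fix u v assume "u \<in> G0" "v \<in> G0"
    then obtain t x s x' where u: "u = ((t *\<^sub>R y0 + A x, \<rho> *\<^sub>R B x), t * \<delta>)"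
      and v: "v = ((s *\<^sub>R y0 + A x', \<rho> *\<^sub>R B x'), s * \<delta>)" unfolding G0_def by blast
    have "u + v = (((t + s) *\<^sub>R y0 + A (x + x'), \<rho> *\<^sub>R B (x + x')), (t + s) * \<delta>)"
      using u v by (simp add: algebra_simps blinfun.add_right)
    then show "u + v \<in> G0" unfolding G0_def by blast
  next
    fix r u assume "u \<in> G0"
    then obtain t x where u: "u = ((t *\<^sub>R y0 + A x, \<rho> *\<^sub>R B x), t * \<delta>)" unfolding G0_def by blast
    have "r *\<^sub>R u = (((r * t) *\<^sub>R y0 + A (r *\<^sub>R x), \<rho> *\<^sub>R B (r *\<^sub>R x)), (r * t) * \<delta>)"
      using u by (simp add: algebra_simps blinfun.scaleR_right)
    then show "r *\<^sub>R u \<in> G0" unfolding G0_def by blast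
  qed
  have G0fun: "a = b" if G1: "(v,a) \<in> G0" and G2: "(v,b) \<in> G0" for v a b
  proof -
    obtain t x where "(v,a) = ((t *\<^sub>R y0 + A x, \<rho> *\<^sub>R B x), t * \<delta>)"
      using G1 unfolding G0_def by blast
    then have u: "v = (t *\<^sub>R y0 + A x, \<rho> *\<^sub>R B x)" "a = t * \<delta>" by simp_all
    obtain s x' where "(v,b) = ((s *\<^sub>R y0 + A x', \<rho> *\<^sub>R B x'), s * \<delta>)"
      using G2 unfolding G0_def by blast
    then have w: "v = (s *\<^sub>R y0 + A x', \<rho> *\<^sub>R B x')" "b = s * \<delta>" by simp_all
    have "t = s"
    proof (rule ccontr)
      assume ts: "t \<noteq> s"
      define w where "w = (1 / (t - s)) *\<^sub>R (x' - x)"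
      have "(t - s) *\<^sub>R y0 = A (x' - x)" using u(1) w(1) by (simp add: algebra_simps blinfun.diff_right)
      moreover have "(1 / (t - s)) *\<^sub>R ((t - s) *\<^sub>R y0) = y0" using ts by simp
      ultimately have "y0 = (1 / (t - s)) *\<^sub>R A (x' - x)" by simp
      then have Aw: "A w = y0" unfolding w_def by (simp add: blinfun.scaleR_right)
      have s1: "snd v = \<rho> *\<^sub>R B x" using u(1) by simp
      have s2: "snd v = \<rho> *\<^sub>R B x'" using w(1) by simp
      have "\<rho> *\<^sub>R B x = \<rho> *\<^sub>R B x'" using s1 s2 by metis
      then have "B x = B x'" using rho by simp
      then have Bw: "B w = 0" unfolding w_def by (simp add: blinfun.scaleR_right blinfun.diff_right)
      have "P w = 0" unfolding P_def using Aw Bw by simp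
      then show False using dle[of w] dpos by simp
    qed
    then show ?thesis using u w by simp
  qed
  have G0dom: "a \<le> p v" if G1: "(v,a) \<in> G0" for v a
  proof -
    obtain t x where "(v,a) = ((t *\<^sub>R y0 + A x, \<rho> *\<^sub>R B x), t * \<delta>)"
      using G1 unfolding G0_def by blast
    then have u: "v = (t *\<^sub>R y0 + A x, \<rho> *\<^sub>R B x)" "a = t * \<delta>" by simp_all
    have pv: "p v = norm (t *\<^sub>R y0 + A x) + \<rho> * norm (B x)" using u rho by (simp add: p_def)
    show ?thesis
    proof (cases "t > 0")
      case False
      then have "a \<le> 0" using u dpos by (simp add: mult_nonpos_nonneg)
      moreover have "0 \<le> p v" using pv rho by simp
      ultimately show ?thesis by linarith
    next
      case True
      define w where "w = (- (1/t)) *\<^sub>R x"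
      have Aw: "A w = - ((1/t) *\<^sub>R A x)" unfolding w_def by (simp add: blinfun.scaleR_right blinfun.minus_right)
      have "t *\<^sub>R (y0 - A w) = t *\<^sub>R y0 + A x" using True unfolding Aw
        by (simp add: algebra_simps)
      moreover have "norm (t *\<^sub>R (y0 - A w)) = t * norm (y0 - A w)" using True by simp
      ultimately have 1: "t * norm (y0 - A w) = norm (t *\<^sub>R y0 + A x)" by simp
      have Bw: "B w = - ((1/t) *\<^sub>R B x)" unfolding w_def by (simp add: blinfun.scaleR_right blinfun.minus_right)
      have "t *\<^sub>R B w = - B x" using True unfolding Bw by simp
      moreover have "norm (t *\<^sub>R B w) = t * norm (B w)" using True by simp
      ultimately have 2: "t * norm (B w) = norm (B x)" by simp
      have "t * P w = p v" unfolding P_def pv using 1 2 by (simp add: algebra_simps)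
      moreover have "t * \<delta> \<le> t * P w" using dle[of w] True by simp
      ultimately show ?thesis using u by simp
    qed
  qed
  have padd: "p (v + w) \<le> p v + p w" for v w
    unfolding p_def using norm_triangle_ineq[of "fst v" "fst w"] norm_triangle_ineq[of "snd v" "snd w"] by simp
  have pscale: "p (c *\<^sub>R v) = c * p v" if "c \<ge> 0" for c v
    unfolding p_def using that by (simp add: algebra_simps)
  obtain F where linF: "linear F" and Fp: "\<And>v. F v \<le> p v" and FG: "\<And>v a. (v,a) \<in> G0 \<Longrightarrow> F v = a"
  proof -
    have "\<exists>F. linear F \<and> (\<forall>x. F x \<le> p x) \<and> (\<forall>x a. (x,a) \<in> G0 \<longrightarrow> F x = a)"
      by (rule hb[of p G0]) (fact padd, fact pscale, fact G0sub, fact G0fun, fact G0dom)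
    then show ?thesis using that by blast
  qed
  have Fadd: "F (v + w) = F v + F w" for v w using linF by (simp add: linear_add)
  have Fsc: "F (r *\<^sub>R v) = r * F v" for r v using linF by (simp add: linear_scale)
  obtain l :: "'y \<Rightarrow>\<^sub>L real" where l: "blinfun_apply l = (\<lambda>y. F (y, 0))" and nl: "norm l \<le> 1"
  proof -
    have "\<exists>l. blinfun_apply l = (\<lambda>y. F (y, 0)) \<and> norm l \<le> (1::real)"
    proof (rule blinfun_of_functional)
      fix x y :: 'y show "F (x + y, 0) = F (x, 0) + F (y, 0)" using Fadd[of "(x,0)" "(y,0)"] by simp
    next
      fix r and x :: 'y show "F (r *\<^sub>R x, 0) = r * F (x, 0)" using Fsc[of r "(x,0)"] by simp
    next
      fix x :: 'y show "F (x, 0) \<le> norm x" using Fp[of "(x,0)"] by (simp add: p_def)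
    qed
    then show ?thesis using that by blast
  qed
  obtain m :: "'z \<Rightarrow>\<^sub>L real" where m: "blinfun_apply m = (\<lambda>z. F (0, z))" and nm: "norm m \<le> 1"
  proof -
    have "\<exists>m. blinfun_apply m = (\<lambda>z. F (0, z)) \<and> norm m \<le> (1::real)"
    proof (rule blinfun_of_functional)
      fix x y :: 'z show "F (0, x + y) = F (0, x) + F (0, y)" using Fadd[of "(0,x)" "(0,y)"] by simp
    next
      fix r and x :: 'z show "F (0, r *\<^sub>R x) = r * F (0, x)" using Fsc[of r "(0,x)"] by simp
    next
      fix x :: 'z show "F (0, x) \<le> norm x" using Fp[of "(0,x)"] by (simp add: p_def)
    qed
    then show ?thesis using that by blast
  qed
  have feas: "adjoint_op A l + \<rho> *\<^sub>R adjoint_op B m = 0"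
  proof (rule blinfun_eqI)
    fix x
    have "((0::real) *\<^sub>R y0 + A x, \<rho> *\<^sub>R B x) = (A x, 0) + \<rho> *\<^sub>R (0, B x)" by simp
    moreover have "(((0::real) *\<^sub>R y0 + A x, \<rho> *\<^sub>R B x), 0 * \<delta>) \<in> G0" unfolding G0_def by blast
    ultimately have "F ((A x, 0) + \<rho> *\<^sub>R (0, B x)) = 0" using FG by fastforce
    then have "F (A x, 0) + F (\<rho> *\<^sub>R (0, B x)) = 0" by (simp only: Fadd)
    then have "F (A x, 0) + \<rho> * F (0, B x) = 0" by (simp only: Fsc)
    then show "blinfun_apply (adjoint_op A l + \<rho> *\<^sub>R adjoint_op B m) x = blinfun_apply 0 x"
      by (simp add: adjoint_op_def l m plus_blinfun.rep_eq scaleR_blinfun.rep_eq)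
  qed
  have ly0: "l y0 = \<delta>"
  proof -
    have "(((1::real) *\<^sub>R y0 + A 0, \<rho> *\<^sub>R B 0), 1 * \<delta>) \<in> G0" unfolding G0_def by blast
    then have "F (y0, 0) = \<delta>" using FG by fastforce
    then show ?thesis using l by simp
  qed
  have "\<delta> = \<bar>blinfun_apply l y0\<bar>" using ly0 dpos by simp
  moreover have "max (norm l) (norm m) \<le> 1" using nl nm by simp
  ultimately have "\<delta> \<in> S" unfolding S_def using feas by blast
  then have "\<delta> \<le> Sup S" using cSup_upper[OF _ Sbdd] by blast
  then have dl: "\<delta> \<le> lh y0" using dopt unfolding S_def by simp
  define u where "u = y0 - A xh"
  define r where "r = norm u"
  define b where "b = norm (B xh)"
  have e: "lh (A xh) + \<rho> * mh (B xh) = 0" using adj_apply[OF dfeas] .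
  have "lh y0 = lh u + lh (A xh)" unfolding u_def by (simp add: blinfun.diff_right)
  then have ly: "lh y0 = lh u + \<rho> * (- mh (B xh))" using e by simp
  have nlh: "norm lh \<le> 1" and nmh: "norm mh \<le> 1" using dnorm by auto
  have a1: "lh u \<le> norm lh * r" unfolding r_def using norm_blinfun[of lh u] by simp
  have a2: "norm lh * r \<le> r" unfolding r_def using nlh by (simp add: mult_left_le_one_le)
  have "- mh (B xh) \<le> norm mh * b" unfolding b_def using norm_blinfun[of mh "B xh"] by simp
  then have a3: "\<rho> * (- mh (B xh)) \<le> \<rho> * (norm mh * b)" using rho mult_left_mono[of "- mh (B xh)" "norm mh * b" \<rho>] by simp
  have a4: "\<rho> * (norm mh * b) \<le> \<rho> * b" unfolding b_def using nmh rho
    by (simp add: mult_left_le_one_le)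
  have dd: "\<delta> = r + \<rho> * b" unfolding \<delta>_def P_def r_def b_def u_def ..
  have lu: "lh u = r" and lur: "norm lh * r = r" using a1 a2 a3 a4 dd dl ly by linarith+
  have mb: "\<rho> * (- mh (B xh)) = \<rho> * b" and mbb: "\<rho> * (norm mh * b) = \<rho> * b"
    using a1 a2 a3 a4 dd dl ly by linarith+
  have mb': "- mh (B xh) = b" using mb rho by (metis mult_cancel_left less_irrefl)
  have mbb': "norm mh * b = b" using mbb rho by (metis mult_cancel_left less_irrefl)
  have lval: "lh y0 = r + \<rho> * b" using ly lu mb by simp
  have r0: "r \<ge> 0" "b \<ge> 0" unfolding r_def b_def by simp_all
  show ?thesis
  proof (intro conjI impI)
    assume "norm lh > norm mh"
    then have "norm mh < 1" using dnorm by linarith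
    moreover have "(1 - norm mh) * b = 0" using mbb' by (simp add: algebra_simps)
    ultimately have "b = 0" by simp
    then show "B xh = 0" "norm (y0 - A xh) = lh y0" using lval unfolding b_def r_def u_def by simp_all
  next
    assume "norm lh < norm mh"
    then have "norm lh < 1" using dnorm by linarith
    moreover have "(1 - norm lh) * r = 0" using lur by (simp add: algebra_simps)
    ultimately have "r = 0" by simp
    then show "A xh = y0" "\<rho> * norm (B xh) = lh y0" using lval unfolding b_def r_def u_def by simp_all
  next
    assume eq: "norm lh = norm mh"
    then have n1: "norm lh = 1" "norm mh = 1" using dnorm by auto
    show "(B xh = 0 \<and> norm (y0 - A xh) = lh y0)
          \<or> (A xh = y0 \<and> \<rho> * norm (B xh) = lh y0)
          \<or> (y0 - A xh \<noteq> 0 \<and> B xh \<noteq> 0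
             \<and> norming_for ((y0 - A xh) /\<^sub>R norm (y0 - A xh)) lh
             \<and> norming_for (- (B xh /\<^sub>R norm (B xh))) mh)"
    proof (cases "b = 0")
      case True then show ?thesis using lval unfolding b_def r_def u_def by simp
    next
      case bn: False
      show ?thesis
      proof (cases "r = 0")
        case True then show ?thesis using lval unfolding b_def r_def u_def by simp
      next
        case rn: False
        have "norming_for (u /\<^sub>R r) lh"
          unfolding norming_for_def using rn r0 lu n1
          by (simp add: blinfun.scaleR_right r_def)
        moreover have "norming_for (- (B xh /\<^sub>R b)) mh"
        proof -
          have mv: "mh (B xh) = - b" using mb' by simp
          have nb: "norm (B xh) = b" unfolding b_def ..
          have "norm (- (B xh /\<^sub>R b)) = 1" using bn r0 nb by simp
          moreover have "mh (- (B xh /\<^sub>R b)) = 1"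
            by (simp add: blinfun.scaleR_right blinfun.minus_right mv bn)
          ultimately show ?thesis unfolding norming_for_def using n1 by simp
        qed
        ultimately show ?thesis using rn bn unfolding u_def r_def b_def by auto
      qed
    qed
  qed
qed

end
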